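(* Let $G$ be a finite abelian group of size $N$, let $\epsilon > 0$, $f:G\rightarrow \mathbb{R}$, and let $A\subseteq G$ have size $\alpha N$. Suppose that $B$ is a Bohr set in $G$ such that for every $t\in B$ \[\|f*1_A(\cdot + t) - f*1_A\|_{\infty} \leq \epsilon.\] Further assume that $\|f\|_1\leq 1/(2\alpha)$ and $f*1_A(0)\geq 1-\epsilon$. Then there exists $x\in G$ such that $B\cap (x+A)$ has density at least $2\alpha(1-2\epsilon)$ inside $B$, i.e. $|B\cap(x+A)|\geq 2\alpha(1-2\epsilon)|B|$.
   Context: For $\Gamma\subseteq\widehat{G}$ (the group of characters of $G$) and $0<\rho\leq 2$, the Bohr set $\mathrm{Bohr}(\Gamma,\rho)=\{x\in G: |1-\gamma(x)|\leq\rho \text{ for all }\gamma\in\Gamma\}$. Convolution: $f*g(x)=\sum_{t\in G}f(t)g(x-t)$. $\|f\|_1=\sum_{x}|f(x)|$, $\|f\|_\infty=\max_x|f(x)|$. *)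

theory Defs
  imports "HOL-Analysis.Analysis"
begin

definition character :: "('a::ab_group_add \<Rightarrow> complex) \<Rightarrow> bool" where
  "character \<gamma> \<longleftrightarrow> (\<forall>x y. \<gamma> (x + y) = \<gamma> x * \<gamma> y) \<and> (\<forall>x. norm (\<gamma> x) = 1)"

definition Bohr :: "('a::ab_group_add \<Rightarrow> complex) set \<Rightarrow> real \<Rightarrow> 'a set" where
  "Bohr \<Gamma> \<rho> = {x. \<forall>\<gamma>\<in>\<Gamma>. norm (1 - \<gamma> x) \<le> \<rho>}"

definition is_Bohr_set :: "'a::ab_group_add set \<Rightarrow> bool" where
  "is_Bohr_set B \<longleftrightarrow> (\<exists>\<Gamma> \<rho>. \<Gamma> \<subseteq> {\<gamma>. character \<gamma>} \<and> 0 < \<rho> \<and> \<rho> \<le> 2 \<and> B = Bohr \<Gamma> \<rho>)"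

definition conv :: "('a::{ab_group_add,finite} \<Rightarrow> real) \<Rightarrow> ('a \<Rightarrow> real) \<Rightarrow> 'a \<Rightarrow> real" where
  "conv f g x = (\<Sum>t\<in>UNIV. f t * g (x - t))"

definition l1norm :: "('a::finite \<Rightarrow> real) \<Rightarrow> real" where
  "l1norm f = (\<Sum>x\<in>UNIV. \<bar>f x\<bar>)"

definition linfnorm :: "('a::finite \<Rightarrow> real) \<Rightarrow> real" where
  "linfnorm f = Max (range (\<lambda>x. \<bar>f x\<bar>))"

end

theory Submission
  imports Defs
begin

theorem lemma1:
  fixes f :: "'a::{ab_group_add,finite} \<Rightarrow> real"
    and A B :: "'a set" and \<epsilon> \<alpha> :: real
  assumes "\<epsilon> > 0"
    and "\<alpha> = real (card A) / real CARD('a)"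
    and "is_Bohr_set B"
    and "\<forall>t\<in>B. linfnorm (\<lambda>x. conv f (indicator A) (x + t) - conv f (indicator A) x) \<le> \<epsilon>"
    and "l1norm f \<le> 1 / (2 * \<alpha>)"
    and "conv f (indicator A) 0 \<ge> 1 - \<epsilon>"
  shows "\<exists>x. real (card (B \<inter> (\<lambda>a. x + a) ` A)) \<ge> 2 * \<alpha> * (1 - 2 * \<epsilon>) * real (card B)"
proof -
  define F where "F = conv f (indicator A)"
  define c where "c s = real (card (B \<inter> (\<lambda>a. s + a) ` A))" for s
  have "Max (range c) \<in> range c" by (rule Max_in) auto
  then obtain x where x: "c x = Max (range c)" by (metis imageE)
  have cx: "c s \<le> c x" for s unfolding x by (rule Max_ge) auto
  have c0: "0 \<le> c s" for s unfolding c_def by simp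
  have Ft: "F t \<ge> 1 - 2 * \<epsilon>" if "t \<in> B" for t
  proof -
    have "\<bar>F (0 + t) - F 0\<bar> \<le> linfnorm (\<lambda>x. F (x + t) - F x)"
      unfolding linfnorm_def by (rule Max_ge) (simp, rule rangeI)
    also have "\<dots> \<le> \<epsilon>" using assms(4) that unfolding F_def by auto
    finally show ?thesis using assms(6) unfolding F_def by auto
  qed
  have cnt: "(\<Sum>t\<in>B. indicator A (t - s)) = c s" for s :: 'a
  proof -
    have "(\<Sum>t\<in>B. (indicator A (t - s) :: real)) = (\<Sum>t\<in>B. indicator ((\<lambda>a. s + a) ` A) t)"
    proof (rule sum.cong)
      fix t assume "t \<in> B"
      have "(t - s \<in> A) = (t \<in> (\<lambda>a. s + a) ` A)"
        by (auto simp: image_iff intro!: bexI[of _ "t - s"])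
      then show "(indicator A (t - s) :: real) = indicator ((\<lambda>a. s + a) ` A) t"
        by (simp add: indicator_def)
    qed simp
    also have "\<dots> = c s" unfolding c_def
      by (simp add: indicator_def sum.If_cases Int_def)
    finally show ?thesis .
  qed
  have "(1 - 2 * \<epsilon>) * real (card B) \<le> (\<Sum>t\<in>B. F t)"
    using sum_mono[of B "\<lambda>_. 1 - 2 * \<epsilon>" F] Ft by (auto simp: mult.commute)
  also have "\<dots> = (\<Sum>s\<in>UNIV. f s * c s)"
  proof -
    have "(\<Sum>t\<in>B. F t) = (\<Sum>t\<in>B. \<Sum>s\<in>UNIV. f s * indicator A (t - s))"
      unfolding F_def conv_def by simp
    also have "\<dots> = (\<Sum>s\<in>UNIV. \<Sum>t\<in>B. f s * indicator A (t - s))"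
      by (rule sum.swap)
    also have "\<dots> = (\<Sum>s\<in>UNIV. f s * (\<Sum>t\<in>B. indicator A (t - s)))"
      by (simp only: sum_distrib_left)
    also have "\<dots> = (\<Sum>s\<in>UNIV. f s * c s)" by (simp only: cnt)
    finally show ?thesis .
  qed
  also have "\<dots> \<le> (\<Sum>s\<in>UNIV. \<bar>f s\<bar> * c x)"
  proof (rule sum_mono)
    fix s
    have "f s * c s \<le> \<bar>f s\<bar> * c s" using c0[of s] by (simp add: mult_right_mono)
    also have "\<dots> \<le> \<bar>f s\<bar> * c x" using cx[of s] by (simp add: mult_left_mono)
    finally show "f s * c s \<le> \<bar>f s\<bar> * c x" .
  qed
  also have "\<dots> = l1norm f * c x" unfolding l1norm_def by (simp add: sum_distrib_right)
  finally have key: "(1 - 2 * \<epsilon>) * real (card B) \<le> l1norm f * c x" .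
  show ?thesis
  proof (cases "\<alpha> > 0")
    case False
    have "\<alpha> \<ge> 0" using assms(2) by simp
    with False have "\<alpha> = 0" by simp
    then show ?thesis using c0 by auto
  next
    case True
    have "l1norm f * c x \<le> 1 / (2 * \<alpha>) * c x"
      using mult_right_mono[OF assms(5) c0[of x]] .
    with key have "(1 - 2 * \<epsilon>) * real (card B) \<le> c x / (2 * \<alpha>)" by simp
    with True have "2 * \<alpha> * ((1 - 2 * \<epsilon>) * real (card B)) \<le> c x"
      by (simp add: field_simps)
    then show ?thesis unfolding c_def by (auto simp: algebra_simps)
  qed
qed

end
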